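(* Consider the control-affine system $\dot x = f(x) + g(x)u$ with $f,g$ Lipschitz and $\mathcal{C}^{m-1}$, state set $\mathcal{X}\subset\mathbb{R}^{n_x}$ compact, control set $\mathcal{U}\subset\mathbb{R}^{n_u}$ compact, and a $\mathcal{C}^m$ function $h$ of relative degree $m$. Assume (Assumption 1): the set $\mathcal{X}_e = \{x_e : \exists u_e \in \mathcal{U},\ 0 = f(x_e) + g(x_e)u_e\}$ is closed, convex and known, and $g(x_e)$ has full column rank for every $x_e \in \mathcal{X}_e$. Let $P_{\mathcal{X}_e}(x) = \arg\min\{\|x - x'\|_2 : x' \in \mathcal{X}_e\}$ and $\zeta(x_e) = -g(x_e)^\dagger f(x_e)$. With $\Gamma_i$, $\psi_i$, $a(x)$, $b(x)$ as in the context, let $c(x)$ be a vector orthogonal to $a(x)$ and continuous in $x$, let $d:\mathbb{R}\times\mathbb{R}\to\mathbb{R}$ be continuous with $d(0,0) > 0$, let $u_n$ be a nominal controller, and let $\pi'(x)$ be a minimizer of $\|u - u_n(x)\|_2^2$ over $u \in \mathcal{U}$ subject to $$a(x)^\top u \ge b(x), \qquad c(x)^\top\big[u - \zeta(P_{\mathcal{X}_e}(x))\big] \ge d\big(h(x), \|x - P_{\mathcal{X}_e}(x)\|_2\big).$$ Assume this problem is feasible for each $x \in \mathcal{X}$ and $\pi'(x) \notin \partial\mathcal{U}$. If the system controlled by $\pi'$ is at an equilibrium $(x_e,u_e)$, i.e. $u_e = \pi'(x_e)$ and $0 = f(x_e) + g(x_e)u_e$, then either (i) $u_n(x_e) = u_e$,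 or (ii) $d(h(x_e),0) = 0$ and $u_n(x_e) = \zeta(x_e) - \rho\, c(x_e)$ for some $\rho \ge 0$.
   Context: $h$ has relative degree $m$ means $L_g L_f^{i} h \equiv 0$ for $i = 0,\dots,m-2$. Let $\Gamma_1,\dots,\Gamma_m$ be class $\mathcal{K}$ functions (continuous, strictly increasing, zero at zero) with $\Gamma_i \in \mathcal{C}^{m-i}$; $\psi_0 = h$, $\psi_i = \dot\psi_{i-1} + \Gamma_i(\psi_{i-1})$ for $i = 1,\dots,m-1$ (time derivatives along the system); $a(x) = (L_g L_f^{m-1} h(x))^\top$ and $b(x) = -L_f^m h(x) - \sum_{i=0}^{m-1} L_f^i(\Gamma_{m-i}\circ\psi_{m-i-1})(x)$. $g^\dagger$ denotes the Moore–Penrose pseudoinverse and $\partial\mathcal{U}$ the boundary of $\mathcal{U}$. *)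

theory Defs
  imports "HOL-Analysis.Analysis"
begin

fun ck :: "nat \<Rightarrow> ('a::real_normed_vector \<Rightarrow> 'b::real_normed_vector) \<Rightarrow> bool" where
  "ck 0 F \<longleftrightarrow> continuous_on UNIV F"
| "ck (Suc k) F \<longleftrightarrow> (\<forall>x. F differentiable (at x)) \<and>
      (\<forall>v. ck k (\<lambda>x. frechet_derivative F (at x) v))"

definition lie :: "(real^'n \<Rightarrow> real^'n) \<Rightarrow> (real^'n \<Rightarrow> real) \<Rightarrow> real^'n \<Rightarrow> real" where
  "lie F phi x = frechet_derivative phi (at x) (F x)"

definition lie_iter :: "(real^'n \<Rightarrow> real^'n) \<Rightarrow> nat \<Rightarrow> (real^'n \<Rightarrow> real) \<Rightarrow> real^'n \<Rightarrow> real" where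
  "lie_iter F i phi = ((lie F) ^^ i) phi"

text \<open>L_g phi for the input matrix g (columns g_j): the row vector (L_{g_j} phi)_j,
  stored as a vector in real^'m (i.e. already transposed).\<close>
definition lie_g :: "(real^'n \<Rightarrow> real^'m^'n) \<Rightarrow> (real^'n \<Rightarrow> real) \<Rightarrow> real^'n \<Rightarrow> real^'m" where
  "lie_g g phi x = (\<chi> j. lie (\<lambda>y. column j (g y)) phi x)"

text \<open>psi_0 = h, psi_i = d/dt psi_{i-1} + Gamma_i(psi_{i-1}); the time derivative along the
  system of psi_{i-1} (i <= m-1) is L_f psi_{i-1}, as L_g psi_{i-1} = 0 by relative degree.\<close>
fun psi :: "(real^'n \<Rightarrow> real^'n) \<Rightarrow> (nat \<Rightarrow> real \<Rightarrow> real) \<Rightarrow> (real^'n \<Rightarrow> real) \<Rightarrow> nat \<Rightarrow> real^'n \<Rightarrow> real" where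
  "psi f \<Gamma> h 0 = h"
| "psi f \<Gamma> h (Suc i) = (\<lambda>x. lie f (psi f \<Gamma> h i) x + \<Gamma> (Suc i) (psi f \<Gamma> h i x))"

definition acoef :: "(real^'n \<Rightarrow> real^'n) \<Rightarrow> (real^'n \<Rightarrow> real^'m^'n) \<Rightarrow> (real^'n \<Rightarrow> real) \<Rightarrow> nat \<Rightarrow> real^'n \<Rightarrow> real^'m" where
  "acoef f g h m x = lie_g g (lie_iter f (m - 1) h) x"

definition bcoef :: "(real^'n \<Rightarrow> real^'n) \<Rightarrow> (nat \<Rightarrow> real \<Rightarrow> real) \<Rightarrow> (real^'n \<Rightarrow> real) \<Rightarrow> nat \<Rightarrow> real^'n \<Rightarrow> real" where
  "bcoef f \<Gamma> h m x = - lie_iter f m h x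
     - (\<Sum>i<m. lie_iter f i (\<lambda>y. \<Gamma> (m - i) (psi f \<Gamma> h (m - i - 1) y)) x)"

definition pinv :: "real^'m^'n \<Rightarrow> real^'n^'m" where
  "pinv A = (THE B. A ** B ** A = A \<and> B ** A ** B = B \<and>
                     transpose (A ** B) = A ** B \<and> transpose (B ** A) = B ** A)"

definition class_K :: "(real \<Rightarrow> real) \<Rightarrow> bool" where
  "class_K G \<longleftrightarrow> continuous_on UNIV G \<and> strict_mono G \<and> G 0 = 0"

end

theory Submission
  imports Defs
begin


lemma pinv_left:
  fixes G :: "real^'m^'n"
  assumes inj: "inj ((*v) G)"
  shows "pinv G ** G = mat 1"
proof -
  define S where "S = transpose G ** G"
  have injS: "inj ((*v) S)"
  proof (rule injI)
    fix x y assume "S *v x = S *v y"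
    hence "S *v (x - y) = 0" by (simp add: matrix_vector_mult_diff_distrib)
    hence "(x - y) \<bullet> (S *v (x - y)) = 0" by simp
    moreover have "(x - y) \<bullet> (S *v (x - y)) = (G *v (x - y)) \<bullet> (G *v (x - y))"
    proof -
      have "(x - y) \<bullet> (S *v (x - y)) = (x - y) \<bullet> (transpose G *v (G *v (x - y)))"
        unfolding S_def by (simp add: matrix_vector_mul_assoc)
      also have "\<dots> = (G *v (x - y)) \<bullet> (G *v (x - y))"
        by (subst inner_commute) (simp add: dot_lmul_matrix)
      finally show ?thesis .
    qed
    ultimately have "G *v (x - y) = 0" by simp
    hence "G *v x = G *v y" by (simp add: matrix_vector_mult_diff_distrib)
    thus "x = y" using inj by (simp add: inj_eq)
  qed
  obtain M where M: "M ** S = mat 1"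
    using injS matrix_left_invertible_injective by blast
  have M2: "S ** M = mat 1" using M matrix_left_right_inverse by blast
  have ST: "transpose S = S" unfolding S_def by (simp add: matrix_transpose_mul)
  have "transpose M ** S = mat 1"
    by (metis M2 ST matrix_transpose_mul transpose_mat)
  hence MT: "transpose M = M"
    by (metis M2 matrix_mul_assoc matrix_mul_lid matrix_mul_rid)
  define B0 where "B0 = M ** transpose G"
  have B0G: "B0 ** G = mat 1" unfolding B0_def using M S_def by (simp add: matrix_mul_assoc)
  have P: "G ** B0 ** G = G \<and> B0 ** G ** B0 = B0 \<and>
           transpose (G ** B0) = G ** B0 \<and> transpose (B0 ** G) = B0 ** G"
    using B0G
    by (auto simp: B0_def matrix_mul_assoc[symmetric] matrix_transpose_mul MT)
  have U: "B = B0" if "G ** B ** G = G \<and> B ** G ** B = B \<and>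
           transpose (G ** B) = G ** B \<and> transpose (B ** G) = B ** G" for B
  proof -
    have "transpose G = transpose (G ** B ** G)" using that by simp
    also have "\<dots> = transpose G ** transpose (G ** B)"
      by (simp only: matrix_transpose_mul)
    also have "\<dots> = S ** B" using that
      by (simp add: S_def matrix_mul_assoc)
    finally have "M ** transpose G = M ** (S ** B)" by simp
    also have "\<dots> = (M ** S) ** B" by (simp only: matrix_mul_assoc)
    also have "\<dots> = B" by (simp add: M)
    finally show ?thesis by (simp add: B0_def)
  qed
  have "pinv G = B0" unfolding pinv_def
    apply (rule the_equality)
     apply (rule P)
    apply (erule U)
    done
  thus ?thesis using B0G by simp
qed



lemma fdw: "u differentiable F \<Longrightarrow> (u has_derivative frechet_derivative u F) F"
  by (simp add: frechet_derivative_works)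

lemma diff_nth:
  fixes u :: "'a::real_normed_vector \<Rightarrow> real^'n"
  shows "u differentiable F \<Longrightarrow> (\<lambda>x. u x $ i) differentiable F"
  unfolding differentiable_def
  using bounded_linear.has_derivative[OF bounded_linear_vec_nth] by blast

lemma fd_add:
  assumes "u differentiable (at x)" "w differentiable (at x)"
  shows "frechet_derivative (\<lambda>x. u x + w x) (at x) =
         (\<lambda>v. frechet_derivative u (at x) v + frechet_derivative w (at x) v)"
  by (rule frechet_derivative_at[symmetric])
     (intro has_derivative_add fdw assms)

lemma fd_mult:
  fixes u w :: "'a::real_normed_vector \<Rightarrow> real"
  assumes "u differentiable (at x)" "w differentiable (at x)"
  shows "frechet_derivative (\<lambda>x. u x * w x) (at x) =
         (\<lambda>v. u x * frechet_derivative w (at x) v + frechet_derivative u (at x) v * w x)"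
  by (rule frechet_derivative_at[symmetric])
     (intro has_derivative_mult fdw assms)

lemma fd_const: "frechet_derivative (\<lambda>x. c) (at x) = (\<lambda>v. 0)"
  by (rule frechet_derivative_at[symmetric]) simp

lemma fd_nth:
  fixes u :: "'a::real_normed_vector \<Rightarrow> real^'n"
  assumes "u differentiable (at x)"
  shows "frechet_derivative (\<lambda>x. u x $ i) (at x) = (\<lambda>v. frechet_derivative u (at x) v $ i)"
  by (rule frechet_derivative_at[symmetric])
     (rule bounded_linear.has_derivative[OF bounded_linear_vec_nth fdw[OF assms]])

lemma ck_mono: "ck (Suc k) F \<Longrightarrow> ck k F"
proof (induction k arbitrary: F)
  case 0
  then show ?case by (auto intro!: differentiable_imp_continuous_on simp: differentiable_on_def
        differentiable_at_withinI)
next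
  case (Suc k)
  then show ?case by auto
qed

lemma ck_const: "ck k (\<lambda>x::'a::real_normed_vector. c::'b::real_normed_vector)"
proof (induction k arbitrary: c)
  case 0 then show ?case by simp
next
  case (Suc k)
  then show ?case by (simp add: fd_const)
qed

lemma ck_add:
  fixes u w :: "'a::real_normed_vector \<Rightarrow> 'b::real_normed_vector"
  shows "ck k u \<Longrightarrow> ck k w \<Longrightarrow> ck k (\<lambda>x. u x + w x)"
proof (induction k arbitrary: u w)
  case 0 then show ?case by (simp add: continuous_on_add)
next
  case (Suc k)
  then show ?case by (simp add: fd_add)
qed

lemma ck_sum:
  fixes u :: "'i \<Rightarrow> 'a::real_normed_vector \<Rightarrow> 'b::real_normed_vector"
  assumes "finite S" "\<And>i. i \<in> S \<Longrightarrow> ck k (u i)"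
  shows "ck k (\<lambda>x. \<Sum>i\<in>S. u i x)"
  using assms
proof (induction S rule: finite_induct)
  case empty then show ?case by (simp add: ck_const)
next
  case (insert a S)
  then show ?case by (simp add: ck_add)
qed

lemma ck_mult:
  fixes u w :: "'a::real_normed_vector \<Rightarrow> real"
  shows "ck k u \<Longrightarrow> ck k w \<Longrightarrow> ck k (\<lambda>x. u x * w x)"
proof (induction k arbitrary: u w)
  case 0 then show ?case by (simp add: continuous_on_mult)
next
  case (Suc k)
  have u: "ck k u" and w: "ck k w" using Suc.prems ck_mono by blast+
  show ?case
  proof (simp only: ck.simps, intro conjI allI)
    fix x show "(\<lambda>x. u x * w x) differentiable (at x)" using Suc.prems by simp
  next
    fix v
    have "ck k (\<lambda>x. u x * frechet_derivative w (at x) v + frechet_derivative u (at x) v * w x)"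
      using Suc.prems u w by (intro ck_add Suc.IH) auto
    thus "ck k (\<lambda>x. frechet_derivative (\<lambda>x. u x * w x) (at x) v)"
      using Suc.prems by (simp add: fd_mult)
  qed
qed

lemma ck_nth:
  fixes u :: "'a::real_normed_vector \<Rightarrow> real^'n"
  shows "ck k u \<Longrightarrow> ck k (\<lambda>x. u x $ i)"
proof (induction k arbitrary: u)
  case 0 then show ?case
    by (simp add: continuous_on_component)
next
  case (Suc k)
  then show ?case
    by (simp add: fd_nth diff_nth)
qed



lemma lin_expand:
  fixes L :: "real^'n \<Rightarrow> real"
  assumes "linear L"
  shows "L y = (\<Sum>i\<in>UNIV. y $ i * L (axis i 1))"
proof -
  have "L y = L (\<Sum>i\<in>UNIV. (y $ i) *\<^sub>R axis i 1)"
    using basis_expansion[of y] by (simp add: scalar_mult_eq_scaleR)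
  also have "\<dots> = (\<Sum>i\<in>UNIV. y $ i * L (axis i 1))"
    using assms by (simp add: linear_sum linear_scale)
  finally show ?thesis .
qed

lemma ck_lie:
  assumes "ck k f" "ck (Suc k) \<phi>"
  shows "ck k (lie f \<phi>)"
proof -
  have "lie f \<phi> = (\<lambda>x. \<Sum>i\<in>UNIV. f x $ i * frechet_derivative \<phi> (at x) (axis i 1))"
  proof
    fix x
    have "linear (frechet_derivative \<phi> (at x))"
      using assms(2) by (auto intro: has_derivative_linear fdw)
    thus "lie f \<phi> x = (\<Sum>i\<in>UNIV. f x $ i * frechet_derivative \<phi> (at x) (axis i 1))"
      unfolding lie_def by (rule lin_expand)
  qed
  moreover have "ck k (\<lambda>x. \<Sum>i\<in>UNIV. f x $ i * frechet_derivative \<phi> (at x) (axis i 1))"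
    using assms by (intro ck_sum ck_mult ck_nth) auto
  ultimately show ?thesis by simp
qed



fun Dl :: "(real^'n \<Rightarrow> real^'n) \<Rightarrow> nat \<Rightarrow> (real^'n \<Rightarrow> real) \<Rightarrow> bool" where
  "Dl f 0 \<phi> = True"
| "Dl f (Suc r) \<phi> = ((\<forall>x. \<phi> differentiable (at x)) \<and> Dl f r (lie f \<phi>))"

fun Zl :: "(real^'n \<Rightarrow> real^'n) \<Rightarrow> (real^'n \<Rightarrow> real^'m^'n) \<Rightarrow> nat \<Rightarrow> (real^'n \<Rightarrow> real) \<Rightarrow> bool" where
  "Zl f g 0 \<phi> = True"
| "Zl f g (Suc r) \<phi> = ((\<forall>x. lie_g g \<phi> x = 0) \<and> Zl f g r (lie f \<phi>))"

lemma Dl_mono: "Dl f (Suc r) \<phi> \<Longrightarrow> Dl f r \<phi>"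
  by (induction r arbitrary: \<phi>) auto

lemma Zl_mono: "Zl f g (Suc r) \<phi> \<Longrightarrow> Zl f g r \<phi>"
  by (induction r arbitrary: \<phi>) auto

lemma Dl_mono': "Dl f r \<phi> \<Longrightarrow> s \<le> r \<Longrightarrow> Dl f s \<phi>"
proof (induction r)
  case 0 then show ?case by simp
next
  case (Suc r) then show ?case using Dl_mono[of f r \<phi>] le_Suc_eq by metis
qed

lemma Zl_mono': "Zl f g r \<phi> \<Longrightarrow> s \<le> r \<Longrightarrow> Zl f g s \<phi>"
proof (induction r)
  case 0 then show ?case by simp
next
  case (Suc r) then show ?case using Zl_mono[of f g r \<phi>] le_Suc_eq by metis
qed

lemma lie_add:
  assumes "\<And>x. u differentiable (at x)" "\<And>x. w differentiable (at x)"
  shows "lie F (\<lambda>x. u x + w x) = (\<lambda>x. lie F u x + lie F w x)"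
  using assms by (simp add: lie_def fd_add fun_eq_iff)

lemma lie_mult:
  assumes "\<And>x. u differentiable (at x)" "\<And>x. w differentiable (at x)"
  shows "lie F (\<lambda>x. u x * w x) = (\<lambda>x. u x * lie F w x + lie F u x * w x)"
  using assms by (simp add: lie_def fd_mult fun_eq_iff)

lemma lie_g_zero_iff: "lie_g g \<phi> x = 0 \<longleftrightarrow> (\<forall>k. lie (\<lambda>y. column k (g y)) \<phi> x = 0)"
  by (simp add: lie_g_def vec_eq_iff)

lemma Dl_add: "Dl f r u \<Longrightarrow> Dl f r w \<Longrightarrow> Dl f r (\<lambda>x. u x + w x)"
proof (induction r arbitrary: u w)
  case 0 then show ?case by simp
next
  case (Suc r)
  then show ?case by (simp add: lie_add)
qed

lemma Zl_add: "Dl f r u \<Longrightarrow> Dl f r w \<Longrightarrow> Zl f g r u \<Longrightarrow> Zl f g r w \<Longrightarrow> Zl f g r (\<lambda>x. u x + w x)"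
proof (induction r arbitrary: u w)
  case 0 then show ?case by simp
next
  case (Suc r)
  then show ?case by (simp add: lie_add lie_g_zero_iff)
qed

lemma Dl_mult: "Dl f r u \<Longrightarrow> Dl f r w \<Longrightarrow> Dl f r (\<lambda>x. u x * w x)"
proof (induction r arbitrary: u w)
  case 0 then show ?case by simp
next
  case (Suc r)
  have u: "Dl f r u" "Dl f r (lie f u)" using Suc.prems(1) Dl_mono by auto
  have w: "Dl f r w" "Dl f r (lie f w)" using Suc.prems(2) Dl_mono by auto
  have "Dl f r (\<lambda>x. u x * lie f w x + lie f u x * w x)"
    by (intro Dl_add Suc.IH u w)
  then show ?case using Suc.prems by (simp add: lie_mult)
qed

lemma Zl_mult: "Dl f r u \<Longrightarrow> Dl f r w \<Longrightarrow> Zl f g r u \<Longrightarrow> Zl f g r w \<Longrightarrow> Zl f g r (\<lambda>x. u x * w x)"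
proof (induction r arbitrary: u w)
  case 0 then show ?case by simp
next
  case (Suc r)
  have u: "Dl f r u" "Dl f r (lie f u)" using Suc.prems(1) Dl_mono by auto
  have w: "Dl f r w" "Dl f r (lie f w)" using Suc.prems(2) Dl_mono by auto
  have u': "Zl f g r u" "Zl f g r (lie f u)" using Suc.prems(3) Zl_mono by auto
  have w': "Zl f g r w" "Zl f g r (lie f w)" using Suc.prems(4) Zl_mono by auto
  have "Zl f g r (\<lambda>x. u x * lie f w x + lie f u x * w x)"
    by (intro Zl_add Suc.IH Dl_mult u w u' w')
  moreover have du: "\<And>x. u differentiable (at x)" using Suc.prems(1) by simp
  moreover have dw: "\<And>x. w differentiable (at x)" using Suc.prems(2) by simp
  moreover have "lie_g g (\<lambda>x. u x * w x) x = 0" for x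
  proof -
    have "lie_g g u x = 0" "lie_g g w x = 0" using Suc.prems(3,4) by simp_all
    thus ?thesis unfolding lie_g_zero_iff lie_mult[OF du dw] by simp
  qed
  ultimately show ?case by (simp only: Zl.simps lie_mult[OF du dw]) blast
qed

lemma lie_comp:
  fixes \<Gamma> :: "real \<Rightarrow> real"
  assumes "\<And>s. \<Gamma> differentiable (at s)" "\<And>x. \<phi> differentiable (at x)"
  shows "lie F (\<lambda>x. \<Gamma> (\<phi> x)) = (\<lambda>x. frechet_derivative \<Gamma> (at (\<phi> x)) 1 * lie F \<phi> x)"
proof
  fix x
  have fc: "frechet_derivative (\<Gamma> \<circ> \<phi>) (at x) =
        frechet_derivative \<Gamma> (at (\<phi> x)) \<circ> frechet_derivative \<phi> (at x)"
    by (rule frechet_derivative_compose) (rule assms(2), rule assms(1))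
  have eq: "(\<lambda>x. \<Gamma> (\<phi> x)) = \<Gamma> \<circ> \<phi>" by (rule ext) (simp only: o_apply)
  have lin: "linear (frechet_derivative \<Gamma> (at (\<phi> x)))"
    using has_derivative_linear[OF fdw[OF assms(1)]] .
  have sc: "frechet_derivative \<Gamma> (at (\<phi> x)) t = t * frechet_derivative \<Gamma> (at (\<phi> x)) 1" for t
    using linear_scale[OF lin, of t 1] by simp
  have "lie F (\<lambda>x. \<Gamma> (\<phi> x)) x = frechet_derivative \<Gamma> (at (\<phi> x)) (frechet_derivative \<phi> (at x) (F x))"
    unfolding lie_def eq fc by (simp only: o_apply)
  also have "\<dots> = frechet_derivative \<Gamma> (at (\<phi> x)) 1 * lie F \<phi> x"
    unfolding lie_def sc[of "frechet_derivative \<phi> (at x) (F x)"] by (rule mult.commute)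
  finally show "lie F (\<lambda>x. \<Gamma> (\<phi> x)) x = frechet_derivative \<Gamma> (at (\<phi> x)) 1 * lie F \<phi> x" .
qed

lemma comp_closed:
  fixes \<Gamma> :: "real \<Rightarrow> real"
  shows "ck r \<Gamma> \<Longrightarrow> Dl f r \<phi> \<Longrightarrow> Zl f g r \<phi> \<Longrightarrow>
    Dl f r (\<lambda>x. \<Gamma> (\<phi> x)) \<and> Zl f g r (\<lambda>x. \<Gamma> (\<phi> x))"
proof (induction r arbitrary: \<Gamma> \<phi>)
  case 0 then show ?case by simp
next
  case (Suc r)
  have dG: "\<And>s. \<Gamma> differentiable (at s)" and ckG: "ck r (\<lambda>s. frechet_derivative \<Gamma> (at s) 1)"
    using Suc.prems(1) by simp_all
  have dphi: "\<And>x. \<phi> differentiable (at x)" using Suc.prems(2) by simp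
  have IH: "Dl f r (\<lambda>x. frechet_derivative \<Gamma> (at (\<phi> x)) 1) \<and>
            Zl f g r (\<lambda>x. frechet_derivative \<Gamma> (at (\<phi> x)) 1)"
    using Suc.IH[OF ckG Dl_mono[OF Suc.prems(2)] Zl_mono[OF Suc.prems(3)]] .
  have L: "Dl f r (lie f \<phi>)" "Zl f g r (lie f \<phi>)" using Suc.prems(2,3) by simp_all
  have P: "Dl f r (\<lambda>x. frechet_derivative \<Gamma> (at (\<phi> x)) 1 * lie f \<phi> x)"
          "Zl f g r (\<lambda>x. frechet_derivative \<Gamma> (at (\<phi> x)) 1 * lie f \<phi> x)"
    using IH L Dl_mult[of f r "\<lambda>x. frechet_derivative \<Gamma> (at (\<phi> x)) 1" "lie f \<phi>"]
      Zl_mult[of f r "\<lambda>x. frechet_derivative \<Gamma> (at (\<phi> x)) 1" "lie f \<phi>" g] by simp_all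
  have diff: "\<And>x. (\<lambda>x. \<Gamma> (\<phi> x)) differentiable (at x)"
    using differentiable_compose[of \<Gamma> \<phi> _ UNIV] dG dphi by simp
  have lg: "\<And>x. lie_g g (\<lambda>x. \<Gamma> (\<phi> x)) x = 0"
  proof -
    fix x
    have "lie_g g \<phi> x = 0" using Suc.prems(3) by simp
    thus "lie_g g (\<lambda>x. \<Gamma> (\<phi> x)) x = 0"
      unfolding lie_g_zero_iff lie_comp[OF dG dphi] by simp
  qed
  have E: "lie f (\<lambda>x. \<Gamma> (\<phi> x)) = (\<lambda>x. frechet_derivative \<Gamma> (at (\<phi> x)) 1 * lie f \<phi> x)"
    by (rule lie_comp[OF dG dphi])
  show ?case
    apply (simp only: Dl.simps Zl.simps E)
    apply (intro conjI allI diff lg P)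
    done
qed

lemma Dl_iter: "Dl f r \<phi> \<Longrightarrow> i < r \<Longrightarrow> lie_iter f i \<phi> differentiable (at x)"
proof (induction r arbitrary: \<phi> i)
  case 0 then show ?case by simp
next
  case (Suc r)
  show ?case
  proof (cases i)
    case 0 then show ?thesis using Suc.prems by (simp add: lie_iter_def)
  next
    case (Suc j)
    have "lie_iter f i \<phi> = lie_iter f j (lie f \<phi>)"
      by (simp add: lie_iter_def Suc funpow_swap1)
    then show ?thesis using Suc.IH[of "lie f \<phi>" j] Suc.prems \<open>i = Suc j\<close> by simp
  qed
qed

lemma Zl_iter: "Zl f g r \<phi> \<Longrightarrow> i < r \<Longrightarrow> lie_g g (lie_iter f i \<phi>) x = 0"
proof (induction r arbitrary: \<phi> i)
  case 0 then show ?case by simp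
next
  case (Suc r)
  show ?case
  proof (cases i)
    case 0 then show ?thesis using Suc.prems by (simp add: lie_iter_def)
  next
    case (Suc j)
    have "lie_iter f i \<phi> = lie_iter f j (lie f \<phi>)"
      by (simp add: lie_iter_def Suc funpow_swap1)
    then show ?thesis using Suc.IH[of "lie f \<phi>" j] Suc.prems \<open>i = Suc j\<close> by simp
  qed
qed

lemma Zl_of_iter: "(\<And>i x. i < r \<Longrightarrow> lie_g g (lie_iter f i \<phi>) x = 0) \<Longrightarrow> Zl f g r \<phi>"
proof (induction r arbitrary: \<phi>)
  case 0 then show ?case by simp
next
  case (Suc r)
  have "lie_g g \<phi> x = 0" for x using Suc.prems[of 0 x] by (simp add: lie_iter_def)
  moreover have "Zl f g r (lie f \<phi>)"
  proof (rule Suc.IH)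
    fix i x assume "i < r"
    have "lie_iter f i (lie f \<phi>) = lie_iter f (Suc i) \<phi>"
      by (simp add: lie_iter_def funpow_swap1)
    thus "lie_g g (lie_iter f i (lie f \<phi>)) x = 0" using Suc.prems[of "Suc i" x] \<open>i < r\<close> by simp
  qed
  ultimately show ?case by simp
qed

lemma Dl_of_ck: "ck k f \<Longrightarrow> ck (Suc k) \<phi> \<Longrightarrow> Dl f (Suc k) \<phi>"
proof (induction k arbitrary: \<phi>)
  case 0 then show ?case by simp
next
  case (Suc k)
  have "ck (Suc k) (lie f \<phi>)" using Suc.prems by (rule ck_lie)
  hence "Dl f (Suc k) (lie f \<phi>)" using Suc.IH Suc.prems ck_mono by blast
  then show ?case using Suc.prems by simp
qed



lemma aux_half: "(X::real) \<le> D / 2 \<Longrightarrow> Y < X \<Longrightarrow> 0 < D \<Longrightarrow> Y < D"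
  by linarith

lemma aux_neg: "0 < (t::real) \<Longrightarrow> - (t * \<bar>x\<bar>) \<le> t * x"
  using abs_ge_minus_self[of "t * x"] by (simp add: abs_mult)

lemma descent:
  fixes ue un v a c :: "real^'m"
  assumes e: "e > 0" "ball ue e \<subseteq> U"
    and ab: "a \<bullet> ue > b"
    and T: "T > 0" "\<And>t. 0 < t \<Longrightarrow> t < T \<Longrightarrow> d0 \<le> t * (c \<bullet> v)"
    and mn: "\<And>u. u \<in> U \<Longrightarrow> a \<bullet> u \<ge> b \<Longrightarrow> c \<bullet> (u - ue) \<ge> d0 \<Longrightarrow>
               (norm (ue - un))\<^sup>2 \<le> (norm (u - un))\<^sup>2"
  shows "v \<bullet> (un - ue) \<le> 0"
proof (rule ccontr)
  define w where "w = un - ue"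
  assume "\<not> v \<bullet> (un - ue) \<le> 0"
  hence vw: "v \<bullet> w > 0" by (simp add: w_def)
  hence v0: "v \<noteq> 0" by auto
  hence nv: "norm v > 0" by simp
  define t where "t = min (min (T/2) (e / (2 * norm v)))
                          (min ((a \<bullet> ue - b) / (2 * (\<bar>a \<bullet> v\<bar> + 1))) ((v \<bullet> w) / (norm v)\<^sup>2))"
  have t0: "t > 0" unfolding t_def using T e nv ab vw by auto
  have t1: "t < T" unfolding t_def using T by linarith
  have t2: "t * norm v < e"
  proof -
    have "t \<le> e / (2 * norm v)" unfolding t_def by linarith
    moreover have c2: "0 < 2 * norm v" using nv by simp
    ultimately have "t * (2 * norm v) \<le> e" using pos_le_divide_eq[OF c2] by blast
    hence "2 * (t * norm v) \<le> e" by (simp add: algebra_simps)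
    thus ?thesis using e by linarith
  qed
  have t3: "t * \<bar>a \<bullet> v\<bar> < a \<bullet> ue - b"
  proof -
    have "t \<le> (a \<bullet> ue - b) / (2 * (\<bar>a \<bullet> v\<bar> + 1))" unfolding t_def by linarith
    hence "t * (\<bar>a \<bullet> v\<bar> + 1) \<le> (a \<bullet> ue - b) / 2"
      by (simp add: pos_le_divide_eq algebra_simps)
    moreover have "t * \<bar>a \<bullet> v\<bar> < t * (\<bar>a \<bullet> v\<bar> + 1)" using t0 by simp
    ultimately show ?thesis using ab aux_half[of "t * (\<bar>a \<bullet> v\<bar> + 1)" "a \<bullet> ue - b" "t * \<bar>a \<bullet> v\<bar>"] by simp
  qed
  have t4: "t * (norm v)\<^sup>2 \<le> v \<bullet> w"
  proof -
    have "t \<le> (v \<bullet> w) / (norm v)\<^sup>2" unfolding t_def by linarith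
    thus ?thesis using nv by (simp add: pos_le_divide_eq)
  qed
  define u where "u = ue + t *\<^sub>R v"
  have uU: "u \<in> U"
  proof -
    have "dist ue u = t * norm v" unfolding u_def dist_norm using t0 by simp
    thus ?thesis using t2 e by auto
  qed
  have ua: "a \<bullet> u \<ge> b"
  proof -
    have "a \<bullet> u = a \<bullet> ue + t * (a \<bullet> v)" unfolding u_def by (simp add: inner_add_right)
    moreover have "- (t * \<bar>a \<bullet> v\<bar>) \<le> t * (a \<bullet> v)" using t0
      by (rule aux_neg)
    ultimately show ?thesis using t3 by linarith
  qed
  have uc: "c \<bullet> (u - ue) \<ge> d0" unfolding u_def using T(2)[OF t0 t1] by simp
  have "(norm (ue - un))\<^sup>2 \<le> (norm (u - un))\<^sup>2" using mn[OF uU ua uc] .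
  moreover have "(norm (u - un))\<^sup>2 = t\<^sup>2 * (norm v)\<^sup>2 - 2 * t * (v \<bullet> w) + (norm w)\<^sup>2"
  proof -
    have "u - un = t *\<^sub>R v - w" unfolding u_def w_def by simp
    hence "(norm (u - un))\<^sup>2 = (t *\<^sub>R v - w) \<bullet> (t *\<^sub>R v - w)" by (simp add: power2_norm_eq_inner)
    also have "\<dots> = t\<^sup>2 * (v \<bullet> v) - 2 * t * (v \<bullet> w) + w \<bullet> w"
      by (simp add: inner_diff_left inner_diff_right inner_commute power2_eq_square algebra_simps)
    finally show ?thesis by (simp add: power2_norm_eq_inner)
  qed
  moreover have "(norm (ue - un))\<^sup>2 = (norm w)\<^sup>2" unfolding w_def by (simp add: norm_minus_commute)
  moreover have "t\<^sup>2 * (norm v)\<^sup>2 \<le> t * (v \<bullet> w)"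
  proof -
    have "t * (t * (norm v)\<^sup>2) \<le> t * (v \<bullet> w)" using mult_left_mono[OF t4] t0 by simp
    thus ?thesis by (simp add: power2_eq_square mult.assoc)
  qed
  moreover have "t * (v \<bullet> w) > 0" using t0 vw by simp
  ultimately show False by linarith
qed

lemma opt_kkt:
  fixes ue un a c :: "real^'m"
  assumes int: "ue \<in> interior U"
    and ab: "a \<bullet> ue > b"
    and d0: "d0 \<le> 0"
    and mn: "\<And>u. u \<in> U \<Longrightarrow> a \<bullet> u \<ge> b \<Longrightarrow> c \<bullet> (u - ue) \<ge> d0 \<Longrightarrow>
               (norm (ue - un))\<^sup>2 \<le> (norm (u - un))\<^sup>2"
  shows "un = ue \<or> (d0 = 0 \<and> (\<exists>\<rho>\<ge>0. un = ue - \<rho> *\<^sub>R c))"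
proof -
  obtain e where e: "e > 0" "ball ue e \<subseteq> U" using int mem_interior by blast
  define w where "w = un - ue"
  have key: "v \<bullet> w \<le> 0" if "c \<bullet> v \<ge> 0" for v
  proof -
    have "v \<bullet> (un - ue) \<le> 0"
    proof (rule descent[OF e ab _ _ mn])
      show "(0::real) < 1" by simp
      fix t :: real assume "0 < t" "t < 1"
      hence "0 \<le> t * (c \<bullet> v)" using that by simp
      thus "d0 \<le> t * (c \<bullet> v)" using d0 by linarith
    qed
    thus ?thesis unfolding w_def .
  qed
  show ?thesis
  proof (cases "d0 = 0")
    case False
    hence dneg: "d0 < 0" using d0 by simp
    define T where "T = - d0 / (\<bar>c \<bullet> w\<bar> + 1)"
    have T0: "T > 0" unfolding T_def using dneg
      by (simp add: divide_neg_pos add_pos_nonneg)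
    have "w \<bullet> w \<le> 0" unfolding w_def
    proof (rule descent[OF e ab T0 _ mn])
      fix t assume t: "0 < t" "t < T"
      have "t * \<bar>c \<bullet> w\<bar> \<le> T * \<bar>c \<bullet> w\<bar>" using t by (simp add: mult_right_mono)
      also have "\<dots> < - d0"
      proof -
        have "T * (\<bar>c \<bullet> w\<bar> + 1) = - d0" unfolding T_def by simp
        thus ?thesis using T0 by (simp add: algebra_simps)
      qed
      finally have "t * \<bar>c \<bullet> w\<bar> < - d0" .
      moreover have "- (t * \<bar>c \<bullet> w\<bar>) \<le> t * (c \<bullet> w)" using t
        using aux_neg[of t "c \<bullet> w"] by blast
      ultimately show "d0 \<le> t * (c \<bullet> (un - ue))" unfolding w_def by linarith
    qed
    hence "w \<bullet> w = 0" using inner_ge_zero[of w] by linarith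
    hence "w = 0" by simp
    thus ?thesis unfolding w_def by simp
  next
    case True
    show ?thesis
    proof (cases "c = 0")
      case True
      have "w \<bullet> w \<le> 0" using key[of w] True by simp
      hence "w \<bullet> w = 0" using inner_ge_zero[of w] by linarith
    hence "w = 0" by simp
      thus ?thesis unfolding w_def by simp
    next
      case False
      hence cc: "c \<bullet> c > 0" by simp
      define k where "k = (w \<bullet> c) / (c \<bullet> c)"
      define wp where "wp = w - k *\<^sub>R c"
      have cwp: "c \<bullet> wp = 0" unfolding wp_def k_def using cc
        by (simp add: inner_diff_right inner_commute)
      have "wp \<bullet> w \<le> 0" using key[of wp] cwp by simp
      moreover have "wp \<bullet> wp = wp \<bullet> w"
      proof -
        have "wp \<bullet> wp = wp \<bullet> (w - k *\<^sub>R c)" by (simp only: wp_def[symmetric])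
        also have "\<dots> = wp \<bullet> w - k * (wp \<bullet> c)" by (simp only: inner_diff_right inner_scaleR_right)
        also have "\<dots> = wp \<bullet> w" using cwp by (simp add: inner_commute)
        finally show ?thesis .
      qed
      ultimately have "wp \<bullet> wp = 0" using inner_ge_zero[of wp] by linarith
      hence "wp = 0" by simp
      hence wc: "w = k *\<^sub>R c" unfolding wp_def by simp
      have "c \<bullet> w \<le> 0" using key[of c] by (simp add: inner_commute)
      hence rho: "- k \<ge> 0" unfolding k_def using cc by (simp add: inner_commute divide_nonpos_pos)
      have "un = ue + w" unfolding w_def by simp
      hence "un = ue - (- k) *\<^sub>R c" using wc by simp
      thus ?thesis using rho \<open>d0 = 0\<close> by blast
    qed
  qed
qed



lemma mv_neg: "(A::real^'m^'n) *v (- y) = - (A *v y)"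
  using matrix_vector_mult_diff_distrib[of A 0 y] by simp

lemma lie_at_eq:
  assumes "\<phi> differentiable (at x)" "0 = f x + g x *v u"
  shows "lie f \<phi> x = - (lie_g g \<phi> x \<bullet> u)"
proof -
  have lin: "linear (frechet_derivative \<phi> (at x))"
    using has_derivative_linear[OF fdw[OF assms(1)]] .
  have 1: "lie_g g \<phi> x \<bullet> u = (\<Sum>k\<in>UNIV. u $ k * frechet_derivative \<phi> (at x) (column k (g x)))"
    unfolding inner_vec_def lie_g_def lie_def by (simp add: mult.commute)
  have 2: "frechet_derivative \<phi> (at x) (g x *v u) =
       (\<Sum>k\<in>UNIV. u $ k * frechet_derivative \<phi> (at x) (column k (g x)))"
    unfolding matrix_mult_sum scalar_mult_eq_scaleR using lin by (simp add: linear_sum linear_scale)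
  have 3: "f x = - (g x *v u)" using assms(2) by (simp add: eq_neg_iff_add_eq_0)
  have "lie f \<phi> x = frechet_derivative \<phi> (at x) (- (g x *v u))" unfolding lie_def 3 ..
  also have "\<dots> = - frechet_derivative \<phi> (at x) (g x *v u)" using lin by (simp add: linear_neg)
  finally show ?thesis using 1 2 by simp
qed

lemma classK_zero: "class_K G \<Longrightarrow> G s = 0 \<Longrightarrow> s = 0"
  unfolding class_K_def using strict_mono_eq[of G s 0] by simp

lemma lie_iter_0: "lie_iter f 0 \<phi> = \<phi>"
  by (simp add: lie_iter_def)

lemma lie_iter_Suc: "lie_iter f (Suc i) \<phi> = lie f (lie_iter f i \<phi>)"
  by (simp add: lie_iter_def)



theorem proposition3:
  fixes f :: "real^'n \<Rightarrow> real^'n"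
    and g :: "real^'n \<Rightarrow> real^'m^'n"
    and h :: "real^'n \<Rightarrow> real"
    and X Xe :: "(real^'n) set"
    and U :: "(real^'m) set"
    and m :: nat
    and \<Gamma> :: "nat \<Rightarrow> real \<Rightarrow> real"
    and c :: "real^'n \<Rightarrow> real^'m"
    and d :: "real \<Rightarrow> real \<Rightarrow> real"
    and un \<pi>' :: "real^'n \<Rightarrow> real^'m"
    and xe :: "real^'n" and ue :: "real^'m"
  assumes f_lip: "\<exists>L. L-lipschitz_on UNIV f"
    and g_lip: "\<exists>L. L-lipschitz_on UNIV g"
    and f_smooth: "ck (m - 1) f"
    and g_smooth: "ck (m - 1) g"
    and X_compact: "compact X"
    and U_compact: "compact U"
    and m_pos: "m \<ge> 1"
    and h_smooth: "ck m h"
    and rel_deg: "\<And>i x. i + 1 < m \<Longrightarrow> lie_g g (lie_iter f i h) x = 0"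
    and Xe_def: "Xe = {xe. \<exists>ue\<in>U. 0 = f xe + g xe *v ue}"
    and Xe_closed: "closed Xe"
    and Xe_convex: "convex Xe"
    and g_full_rank: "\<And>x. x \<in> Xe \<Longrightarrow> rank (g x) = CARD('m)"
    and Gamma_K: "\<And>i. 1 \<le> i \<Longrightarrow> i \<le> m \<Longrightarrow> class_K (\<Gamma> i)"
    and Gamma_smooth: "\<And>i. 1 \<le> i \<Longrightarrow> i \<le> m \<Longrightarrow> ck (m - i) (\<Gamma> i)"
    and c_orth: "\<And>x. c x \<bullet> acoef f g h m x = 0"
    and c_cont: "continuous_on UNIV c"
    and d_cont: "continuous_on UNIV (\<lambda>(s, t). d s t)"
    and d_pos: "d 0 0 > 0"
    and feasible: "\<And>x. x \<in> X \<Longrightarrow> \<exists>u\<in>U.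
         acoef f g h m x \<bullet> u \<ge> bcoef f \<Gamma> h m x \<and>
         c x \<bullet> (u - (- (pinv (g (closest_point Xe x)) *v f (closest_point Xe x))))
           \<ge> d (h x) (norm (x - closest_point Xe x))"
    and pi_feas: "\<And>x. x \<in> X \<Longrightarrow> \<pi>' x \<in> U \<and>
         acoef f g h m x \<bullet> \<pi>' x \<ge> bcoef f \<Gamma> h m x \<and>
         c x \<bullet> (\<pi>' x - (- (pinv (g (closest_point Xe x)) *v f (closest_point Xe x))))
           \<ge> d (h x) (norm (x - closest_point Xe x))"
    and pi_min: "\<And>x u. x \<in> X \<Longrightarrow> u \<in> U \<Longrightarrow>
         acoef f g h m x \<bullet> u \<ge> bcoef f \<Gamma> h m x \<Longrightarrow>
         c x \<bullet> (u - (- (pinv (g (closest_point Xe x)) *v f (closest_point Xe x))))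
           \<ge> d (h x) (norm (x - closest_point Xe x)) \<Longrightarrow>
         (norm (\<pi>' x - un x))\<^sup>2 \<le> (norm (u - un x))\<^sup>2"
    and pi_interior: "\<And>x. x \<in> X \<Longrightarrow> \<pi>' x \<notin> frontier U"
    and xe_X: "xe \<in> X"
    and ue_def: "ue = \<pi>' xe"
    and equilibrium: "0 = f xe + g xe *v ue"
  shows "un xe = ue \<or>
         (d (h xe) 0 = 0 \<and>
          (\<exists>\<rho>\<ge>0. un xe = (- (pinv (g xe) *v f xe)) - \<rho> *\<^sub>R c xe))"
proof -
  have ueU: "ue \<in> U" using pi_feas[OF xe_X] ue_def by simp
  have xeXe: "xe \<in> Xe" using Xe_def ueU equilibrium by blast
  have cp: "closest_point Xe xe = xe" by (rule closest_point_self[OF xeXe])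
  have injG: "inj ((*v) (g xe))" using g_full_rank[OF xeXe] full_rank_injective by blast
  have fx: "f xe = - (g xe *v ue)" using equilibrium by (simp add: eq_neg_iff_add_eq_0)
  have zeta: "- (pinv (g xe) *v f xe) = ue"
  proof -
    have "- (pinv (g xe) *v f xe) = pinv (g xe) *v (g xe *v ue)" unfolding fx mv_neg by simp
    also have "\<dots> = (pinv (g xe) ** g xe) *v ue" by (simp add: matrix_vector_mul_assoc)
    also have "\<dots> = ue" using pinv_left[OF injG] by simp
    finally show ?thesis .
  qed
  have dle: "d (h xe) 0 \<le> 0"
    using pi_feas[OF xe_X] unfolding cp zeta ue_def[symmetric] by simp
  have m1: "Suc (m - 1) = m" using m_pos by simp
  have ckh: "ck (Suc (m - 1)) h" unfolding m1 by (rule h_smooth)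
  have Dh: "Dl f m h" using Dl_of_ck[OF f_smooth ckh] unfolding m1 .
  have Zh: "Zl f g (m - 1) h"
  proof (rule Zl_of_iter)
    fix i x assume "i < m - 1"
    thus "lie_g g (lie_iter f i h) x = 0" by (intro rel_deg) simp
  qed
  have psiP: "Dl f (m - j) (psi f \<Gamma> h j) \<and> Zl f g (m - 1 - j) (psi f \<Gamma> h j)" if "j \<le> m - 1" for j
    using that
  proof (induction j)
    case 0 show ?case using Dh Zh by simp
  next
    case (Suc j)
    have "0 < m - Suc j" using Suc.prems by simp
    then obtain r' where r': "m - Suc j = Suc r'" using gr0_implies_Suc by blast
    have mj: "m - j = Suc (Suc r')" and mj1: "m - 1 - j = Suc r'" and mj2: "m - 1 - Suc j = r'"
      using r' Suc.prems by auto
    let ?p = "psi f \<Gamma> h j"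
    have IH: "Dl f (Suc (Suc r')) ?p" "Zl f g (Suc r') ?p"
      using Suc.IH Suc.prems mj mj1 by auto
    have ckG: "ck (Suc r') (\<Gamma> (Suc j))" using Gamma_smooth[of "Suc j"] Suc.prems r' by simp
    have C: "Dl f (Suc r') (\<lambda>x. \<Gamma> (Suc j) (?p x)) \<and> Zl f g (Suc r') (\<lambda>x. \<Gamma> (Suc j) (?p x))"
      by (rule comp_closed[OF ckG Dl_mono[OF IH(1)] IH(2)])
    have L1: "Dl f (Suc r') (lie f ?p)" using IH(1) by simp
    have L2: "Zl f g r' (lie f ?p)" using IH(2) by simp
    have D1: "Dl f (Suc r') (psi f \<Gamma> h (Suc j))"
      using Dl_add[OF L1 conjunct1[OF C]] by simp
    have Z1: "Zl f g r' (psi f \<Gamma> h (Suc j))"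
      using Zl_add[OF Dl_mono[OF L1] Dl_mono[OF conjunct1[OF C]] L2 Zl_mono[OF conjunct2[OF C]]] by simp
    show ?case using D1 Z1 r' mj2 by simp
  qed
  have psi_xe: "psi f \<Gamma> h (Suc j) xe = \<Gamma> (Suc j) (psi f \<Gamma> h j xe)" if "Suc j \<le> m - 1" for j
  proof -
    have P: "Dl f (m - j) (psi f \<Gamma> h j)" "Zl f g (m - 1 - j) (psi f \<Gamma> h j)"
      using psiP[of j] that by auto
    have "psi f \<Gamma> h j differentiable (at xe)"
      using Dl_iter[OF P(1), of 0 xe] that by (simp add: lie_iter_0)
    moreover have "lie_g g (psi f \<Gamma> h j) xe = 0"
      using Zl_iter[OF P(2), of 0 xe] that by (simp add: lie_iter_0)
    ultimately have "lie f (psi f \<Gamma> h j) xe = 0"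
      using lie_at_eq[of "psi f \<Gamma> h j" xe f g ue] equilibrium by simp
    thus ?thesis by simp
  qed
  have a_eq: "acoef f g h m xe \<bullet> ue = - lie_iter f m h xe"
  proof -
    have "lie_iter f m h = lie f (lie_iter f (m - 1) h)"
      using lie_iter_Suc[of f "m - 1" h] unfolding m1 .
    moreover have "lie_iter f (m - 1) h differentiable (at xe)"
      using Dl_iter[OF Dh, of "m - 1" xe] m_pos by simp
    ultimately show ?thesis unfolding acoef_def
      using lie_at_eq[of "lie_iter f (m - 1) h" xe f g ue] equilibrium by simp
  qed
  define t where "t i = lie_iter f i (\<lambda>y. \<Gamma> (m - i) (psi f \<Gamma> h (m - i - 1) y)) xe" for i
  have tz: "t i = 0" if i0: "0 < i" and im: "i < m" for i
  proof -
    obtain i' where i': "i = Suc i'" using gr0_implies_Suc[OF i0] by blast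
    let ?q = "psi f \<Gamma> h (m - i - 1)"
    have P: "Dl f (Suc i) ?q" "Zl f g i ?q"
    proof -
      have "m - (m - i - 1) = Suc i" "m - 1 - (m - i - 1) = i" using i0 im by auto
      thus "Dl f (Suc i) ?q" "Zl f g i ?q" using psiP[of "m - i - 1"] by auto
    qed
    have ckG: "ck i (\<Gamma> (m - i))" using Gamma_smooth[of "m - i"] i0 im by simp
    have C: "Dl f i (\<lambda>y. \<Gamma> (m - i) (?q y)) \<and> Zl f g i (\<lambda>y. \<Gamma> (m - i) (?q y))"
      by (rule comp_closed[OF ckG Dl_mono[OF P(1)] P(2)])
    let ?r = "lie_iter f i' (\<lambda>y. \<Gamma> (m - i) (?q y))"
    have "?r differentiable (at xe)" using Dl_iter[OF conjunct1[OF C], of i' xe] i' by simp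
    moreover have "lie_g g ?r xe = 0" using Zl_iter[OF conjunct2[OF C], of i' xe] i' by simp
    ultimately have "lie f ?r xe = 0"
      using lie_at_eq[of ?r xe f g ue] equilibrium by simp
    thus ?thesis unfolding t_def i' lie_iter_Suc by simp
  qed
  have b_eq: "bcoef f \<Gamma> h m xe = - lie_iter f m h xe - \<Gamma> m (psi f \<Gamma> h (m - 1) xe)"
  proof -
    have "(\<Sum>i<m. t i) = (\<Sum>i<m. if i = 0 then t 0 else 0)"
      by (rule sum.cong) (auto simp: tz)
    also have "\<dots> = t 0" using m_pos by simp
    also have "\<dots> = \<Gamma> m (psi f \<Gamma> h (m - 1) xe)" unfolding t_def by (simp add: lie_iter_0)
    finally show ?thesis unfolding bcoef_def t_def by simp
  qed
  have gap: "acoef f g h m xe \<bullet> ue - bcoef f \<Gamma> h m xe = \<Gamma> m (psi f \<Gamma> h (m - 1) xe)"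
    using a_eq b_eq by simp
  have strict: "acoef f g h m xe \<bullet> ue > bcoef f \<Gamma> h m xe"
  proof (rule ccontr)
    assume "\<not> ?thesis"
    moreover have "acoef f g h m xe \<bullet> ue \<ge> bcoef f \<Gamma> h m xe"
      using pi_feas[OF xe_X] ue_def by simp
    ultimately have "\<Gamma> m (psi f \<Gamma> h (m - 1) xe) = 0" using gap by simp
    hence z0: "psi f \<Gamma> h (m - 1) xe = 0" using classK_zero Gamma_K[of m] m_pos by blast
    have "psi f \<Gamma> h (m - 1 - k) xe = 0" if "k \<le> m - 1" for k
      using that
    proof (induction k)
      case 0 then show ?case using z0 by simp
    next
      case (Suc k)
      define j where "j = m - 1 - Suc k"
      have jk: "Suc j = m - 1 - k" "Suc j \<le> m - 1" using Suc.prems unfolding j_def by auto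
      have "\<Gamma> (Suc j) (psi f \<Gamma> h j xe) = 0"
        using psi_xe[OF jk(2)] Suc.IH Suc.prems jk(1) by simp
      moreover have "class_K (\<Gamma> (Suc j))" using Gamma_K[of "Suc j"] jk(2) by simp
      ultimately have "psi f \<Gamma> h j xe = 0" using classK_zero by blast
      thus ?case unfolding j_def .
    qed
    from this[of "m - 1"] have "h xe = 0" by simp
    thus False using dle d_pos by simp
  qed
  have int: "ue \<in> interior U"
    using pi_interior[OF xe_X] ueU closure_subset unfolding ue_def frontier_def by blast
  have mn: "(norm (ue - un xe))\<^sup>2 \<le> (norm (u - un xe))\<^sup>2"
    if "u \<in> U" "acoef f g h m xe \<bullet> u \<ge> bcoef f \<Gamma> h m xe" "c xe \<bullet> (u - ue) \<ge> d (h xe) 0" for u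
    using pi_min[OF xe_X that(1,2)] that(3) unfolding cp zeta ue_def[symmetric] by simp
  have "un xe = ue \<or> (d (h xe) 0 = 0 \<and> (\<exists>\<rho>\<ge>0. un xe = ue - \<rho> *\<^sub>R c xe))"
    by (rule opt_kkt[OF int strict dle mn])
  thus ?thesis unfolding zeta .
qed


end
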